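(* Let $\mathcal{T}$ be the scheme on $\mathcal{M}$ given by $$\mathcal{T}(\mathbf{p})_{2i}=M_{1/2}\big(M_{3/4}(p_{i-1},p_i),\,M_{1/4}(p_i,p_{i+1})\big),\qquad \mathcal{T}(\mathbf{p})_{2i+1}=M_{1/2}(p_i,p_{i+1}),\quad i\in\mathbb{Z}.$$ Then $\delta(\mathcal{T}(\mathbf{p}))\le\tfrac12\,\delta(\mathbf{p})$ for all manifold data $\mathbf{p}$, and $\mathcal{T}$ is convergent.
   Context: $\mathcal{M}$ is a geodesically complete connected Riemannian manifold with distance $d$. For $p_0,p_1\in\mathcal{M}$ a minimal geodesic $\gamma:[0,1]\to\mathcal{M}$ from $p_0$ to $p_1$ is fixed and $M_t(p_0,p_1)=\gamma(t)$, $t\in[0,1]$, so all $M_t(p_0,p_1)$ lie on the same geodesic and $d(M_s(p_0,p_1),M_t(p_0,p_1))=|s-t|d(p_0,p_1)$. Data $\mathbf{p}=(p_i)_{i\in\mathbb{Z}}$ with $\delta(\mathbf{p})=\sup_id(p_i,p_{i+1})<\infty$. This is the adaptation via the symmetric geodesic inductive mean of the linear cubic B-spline scheme with mask $\frac18(1,4,6,4,1)$. Convergence: for every data $\mathbf{p}$ the curves $\mathrm{PG}_k(\mathcal{T}^k(\mathbf{p}))$ converge uniformly on $\mathbb{R}$, where $\mathrm{PG}_k(\mathbf{q})(t)=M_{2^kt-n}(q_n,q_{n+1})$ for $t\in[2^{-k}n,2^{-k}(n+1))$. *)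

theory Defs
  imports "HOL-Analysis.Analysis"
begin

text \<open>Abstract setting: the manifold is replaced by a complete metric space
  (a geodesically complete Riemannian manifold is complete by Hopf--Rinow), and
  the fixed minimal geodesics are encoded by a selection M with M t p0 p1 = gamma(t).\<close>

definition geodesic_selection :: "(real \<Rightarrow> 'a::metric_space \<Rightarrow> 'a \<Rightarrow> 'a) \<Rightarrow> bool" where
  "geodesic_selection M \<longleftrightarrow>
     (\<forall>p0 p1. M 0 p0 p1 = p0 \<and> M 1 p0 p1 = p1 \<and>
       (\<forall>s t. s \<in> {0..1} \<longrightarrow> t \<in> {0..1} \<longrightarrow>
          dist (M s p0 p1) (M t p0 p1) = \<bar>s - t\<bar> * dist p0 p1))"

definition delta :: "(int \<Rightarrow> 'a::metric_space) \<Rightarrow> real" where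
  "delta p = (SUP i. dist (p i) (p (i + 1)))"

definition finite_delta :: "(int \<Rightarrow> 'a::metric_space) \<Rightarrow> bool" where
  "finite_delta p \<longleftrightarrow> bdd_above (range (\<lambda>i. dist (p i) (p (i + 1))))"

definition cubic_scheme :: "(real \<Rightarrow> 'a \<Rightarrow> 'a \<Rightarrow> 'a) \<Rightarrow> (int \<Rightarrow> 'a) \<Rightarrow> int \<Rightarrow> 'a" where
  "cubic_scheme M p j =
     (let i = j div 2 in
      if even j then M (1/2) (M (3/4) (p (i - 1)) (p i)) (M (1/4) (p i) (p (i + 1)))
      else M (1/2) (p i) (p (i + 1)))"

definition PG :: "(real \<Rightarrow> 'a \<Rightarrow> 'a \<Rightarrow> 'a) \<Rightarrow> nat \<Rightarrow> (int \<Rightarrow> 'a) \<Rightarrow> real \<Rightarrow> 'a" where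
  "PG M k q t = (let n = \<lfloor>2 ^ k * t\<rfloor> in M (2 ^ k * t - of_int n) (q n) (q (n + 1)))"

end

theory Submission
  imports Defs
begin

lemma gs_dist:
  assumes G: "geodesic_selection M" and "0 \<le> s" "s \<le> 1" "0 \<le> t" "t \<le> 1"
  shows "dist (M s a b) (M t a b) = \<bar>s - t\<bar> * dist a b"
proof -
  have H: "\<forall>s t. s \<in> {0..1} \<longrightarrow> t \<in> {0..1} \<longrightarrow> dist (M s a b) (M t a b) = \<bar>s - t\<bar> * dist a b"
    using G unfolding geodesic_selection_def by blast
  show ?thesis by (rule H[rule_format]) (use assms in auto)
qed

lemma gs_dist0:
  assumes G: "geodesic_selection M" and s: "0 \<le> s" "s \<le> 1"
  shows "dist (M s a b) a = s * dist a b"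
proof -
  have "dist (M s a b) (M 0 a b) = \<bar>s - 0\<bar> * dist a b"
    using gs_dist[OF G] s by simp
  moreover have "M 0 a b = a" using G unfolding geodesic_selection_def by auto
  ultimately show ?thesis using s by simp
qed

lemma gs_dist1:
  assumes G: "geodesic_selection M" and s: "0 \<le> s" "s \<le> 1"
  shows "dist (M s a b) b = (1 - s) * dist a b"
proof -
  have "dist (M s a b) (M 1 a b) = \<bar>s - 1\<bar> * dist a b"
    using gs_dist[OF G] s by simp
  moreover have "M 1 a b = b" using G unfolding geodesic_selection_def by auto
  ultimately show ?thesis using s by simp
qed

lemma cs_even: "cubic_scheme M p (2*i) = M (1/2) (M (3/4) (p (i - 1)) (p i)) (M (1/4) (p i) (p (i + 1)))"
  unfolding cubic_scheme_def by simp

lemma cs_odd: "cubic_scheme M p (2*i+1) = M (1/2) (p i) (p (i + 1))"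
  unfolding cubic_scheme_def by simp

lemma int_even_odd: obtains i :: int where "j = 2*i \<or> j = 2*i+1"
  by (metis dvd_def odd_two_times_div_two_succ)

lemma step_bound:
  assumes G: "geodesic_selection M" and D: "\<And>i. dist (p i) (p (i + 1)) \<le> D"
  shows "dist (cubic_scheme M p j) (cubic_scheme M p (j + 1)) \<le> D / 2"
proof -
  obtain i where "j = 2*i \<or> j = 2*i+1" by (rule int_even_odd)
  then show ?thesis
  proof
    assume j: "j = 2*i"
    define A where "A = M (3/4) (p (i - 1)) (p i)"
    define B where "B = M (1/4) (p i) (p (i + 1))"
    have e1: "cubic_scheme M p j = M (1/2) A B" using j cs_even A_def B_def by simp
    have e2: "cubic_scheme M p (j+1) = M (1/2) (p i) (p (i + 1))" using j cs_odd by simp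
    have d1: "dist (M (1/2) A B) B = dist A B / 2" using gs_dist1[OF G, of "1/2" A B] by simp
    have d2: "dist B (M (1/2) (p i) (p (i + 1))) = dist (p i) (p (i+1)) / 4"
      using gs_dist[OF G, of "1/4" "1/2" "p i" "p (i+1)"] unfolding B_def by simp
    have dA: "dist A (p i) = dist (p (i - 1)) (p i) / 4"
      using gs_dist1[OF G, of "3/4" "p (i - 1)" "p i"] unfolding A_def by simp
    have dB: "dist (p i) B = dist (p i) (p (i+1)) / 4"
      using gs_dist0[OF G, of "1/4" "p i" "p (i+1)"] unfolding B_def by (simp add: dist_commute)
    have Di: "dist (p (i - 1)) (p i) \<le> D" using D[of "i - 1"] by simp
    have AB: "dist A B \<le> dist A (p i) + dist (p i) B" by (rule dist_triangle)
    have "dist (M (1/2) A B) (M (1/2) (p i) (p (i + 1))) \<le> dist (M (1/2) A B) B + dist B (M (1/2) (p i) (p (i + 1)))"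
      by (rule dist_triangle)
    then show ?thesis using e1 e2 d1 d2 dA dB Di D[of i] AB by simp
  next
    assume j: "j = 2*i+1"
    define A where "A = M (3/4) (p i) (p (i+1))"
    define B where "B = M (1/4) (p (i+1)) (p (i + 1 + 1))"
    have e1: "cubic_scheme M p j = M (1/2) (p i) (p (i + 1))" using j cs_odd by simp
    have "cubic_scheme M p (2*(i+1)) = M (1/2) A B" unfolding cs_even A_def B_def by simp
    then have e2: "cubic_scheme M p (j+1) = M (1/2) A B" using j by (simp add: algebra_simps)
    have d1: "dist (M (1/2) A B) A = dist A B / 2" using gs_dist0[OF G, of "1/2" A B] by simp
    have d2: "dist (M (1/2) (p i) (p (i + 1))) A = dist (p i) (p (i+1)) / 4"
      using gs_dist[OF G, of "1/2" "3/4" "p i" "p (i+1)"] unfolding A_def by simp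
    have dA: "dist A (p (i+1)) = dist (p i) (p (i+1)) / 4"
      using gs_dist1[OF G, of "3/4" "p i" "p (i+1)"] unfolding A_def by simp
    have dB: "dist (p (i+1)) B = dist (p (i+1)) (p (i+1+1)) / 4"
      using gs_dist0[OF G, of "1/4" "p (i+1)" "p (i+1+1)"] unfolding B_def by (simp add: dist_commute)
    have AB: "dist A B \<le> dist A (p (i+1)) + dist (p (i+1)) B" by (rule dist_triangle)
    have "dist (M (1/2) (p i) (p (i + 1))) (M (1/2) A B) \<le> dist (M (1/2) (p i) (p (i + 1))) A + dist A (M (1/2) A B)"
      by (rule dist_triangle)
    then show ?thesis using e1 e2 d1 d2 dA dB D[of i] D[of "i+1"] AB by (simp add: dist_commute)
  qed
qed

lemma iter_bound:
  assumes G: "geodesic_selection M" and D: "\<And>i. dist (p i) (p (i + 1)) \<le> D"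
  shows "dist ((cubic_scheme M ^^ k) p j) ((cubic_scheme M ^^ k) p (j + 1)) \<le> D / 2^k"
proof (induction k arbitrary: j)
  case 0 then show ?case using D by simp
next
  case (Suc k)
  have "dist (cubic_scheme M ((cubic_scheme M ^^ k) p) j) (cubic_scheme M ((cubic_scheme M ^^ k) p) (j + 1)) \<le> (D / 2^k) / 2"
    by (rule step_bound[where p = "(cubic_scheme M ^^ k) p" and D = "D/2^k", OF G Suc.IH])
  then show ?case by simp
qed

lemma floor_half: "\<lfloor>2 * (y::real)\<rfloor> div 2 = \<lfloor>y\<rfloor>"
proof -
  define m where "m = \<lfloor>2*y\<rfloor>"
  have m1: "of_int m \<le> 2*y" "2*y < of_int m + 1" unfolding m_def by linarith+
  have "m mod 2 = 0 \<or> m mod 2 = 1" by auto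
  moreover have "real_of_int m = 2 * real_of_int (m div 2) + real_of_int (m mod 2)"
    by (metis div_mult_mod_eq mult.commute of_int_add of_int_mult of_int_numeral)
  ultimately have "real_of_int (m div 2) \<le> y \<and> y < real_of_int (m div 2) + 1"
    using m1 by auto
  then show ?thesis unfolding m_def[symmetric] by (intro floor_unique[symmetric]) auto
qed

lemma PG_near:
  assumes G: "geodesic_selection M" and D: "\<And>i. dist (q i) (q (i + 1)) \<le> D"
  shows "dist (PG M k q t) (q \<lfloor>2^k * t\<rfloor>) \<le> D"
proof -
  define n where "n = \<lfloor>2^k * t\<rfloor>"
  define s where "s = 2^k * t - of_int n"
  have s: "0 \<le> s" "s \<le> 1" unfolding s_def n_def by linarith+
  have "PG M k q t = M s (q n) (q (n+1))" unfolding PG_def s_def n_def Let_def by simp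
  then have "dist (PG M k q t) (q n) = s * dist (q n) (q (n+1))" using gs_dist0[OF G s] by simp
  also have "\<dots> \<le> 1 * D" using s D[of n] by (intro mult_mono) auto
  finally show ?thesis unfolding n_def by simp
qed

lemma cs_near:
  assumes G: "geodesic_selection M" and D: "\<And>i. dist (q i) (q (i + 1)) \<le> D"
  shows "dist (cubic_scheme M q m) (q (m div 2)) \<le> D / 2"
proof -
  obtain i where "m = 2*i \<or> m = 2*i+1" by (rule int_even_odd)
  then show ?thesis
  proof
    assume j: "m = 2*i"
    define A where "A = M (3/4) (q (i - 1)) (q i)"
    define B where "B = M (1/4) (q i) (q (i + 1))"
    have e1: "cubic_scheme M q m = M (1/2) A B" using j cs_even A_def B_def by simp
    have d1: "dist (M (1/2) A B) B = dist A B / 2" using gs_dist1[OF G, of "1/2" A B] by simp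
    have dA: "dist A (q i) = dist (q (i - 1)) (q i) / 4"
      using gs_dist1[OF G, of "3/4" "q (i - 1)" "q i"] unfolding A_def by simp
    have dB: "dist (q i) B = dist (q i) (q (i+1)) / 4"
      using gs_dist0[OF G, of "1/4" "q i" "q (i+1)"] unfolding B_def by (simp add: dist_commute)
    have Di: "dist (q (i - 1)) (q i) \<le> D" using D[of "i - 1"] by simp
    have AB: "dist A B \<le> dist A (q i) + dist (q i) B" by (rule dist_triangle)
    have "dist (M (1/2) A B) (q i) \<le> dist (M (1/2) A B) B + dist B (q i)"
      by (rule dist_triangle)
    then show ?thesis using e1 d1 dA dB Di D[of i] AB j by (simp add: dist_commute)
  next
    assume j: "m = 2*i+1"
    have e1: "cubic_scheme M q m = M (1/2) (q i) (q (i + 1))" using j cs_odd by simp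
    have "dist (M (1/2) (q i) (q (i + 1))) (q i) = dist (q i) (q (i+1)) / 2"
      using gs_dist0[OF G, of "1/2"] by simp
    then show ?thesis using e1 D[of i] j by simp
  qed
qed

lemma PG_step:
  assumes G: "geodesic_selection M" and D: "\<And>i. dist (q i) (q (i + 1)) \<le> D"
  shows "dist (PG M (Suc k) (cubic_scheme M q) t) (PG M k q t) \<le> 2 * D"
proof -
  define m where "m = \<lfloor>2^(Suc k) * t\<rfloor>"
  have md: "m div 2 = \<lfloor>2^k * t\<rfloor>" unfolding m_def using floor_half[of "2^k*t"]
    by (simp add: mult.assoc)
  have D2: "\<And>i. dist (cubic_scheme M q i) (cubic_scheme M q (i + 1)) \<le> D/2"
    by (rule step_bound[where p=q and D=D, OF G D])
  have a: "dist (PG M (Suc k) (cubic_scheme M q) t) (cubic_scheme M q m) \<le> D/2"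
    unfolding m_def by (rule PG_near[where q="cubic_scheme M q" and D="D/2", OF G D2])
  have b: "dist (cubic_scheme M q m) (q (m div 2)) \<le> D / 2" by (rule cs_near[where q=q and D=D, OF G D])
  have c: "dist (PG M k q t) (q (m div 2)) \<le> D" unfolding md by (rule PG_near[where q=q and D=D, OF G D])
  have "dist (PG M (Suc k) (cubic_scheme M q) t) (PG M k q t) \<le>
     dist (PG M (Suc k) (cubic_scheme M q) t) (cubic_scheme M q m) + dist (cubic_scheme M q m) (q (m div 2)) + dist (PG M k q t) (q (m div 2))"
  proof -
    have "dist (PG M (Suc k) (cubic_scheme M q) t) (PG M k q t) \<le> dist (PG M (Suc k) (cubic_scheme M q) t) (q (m div 2)) + dist (q (m div 2)) (PG M k q t)"
      by (rule dist_triangle)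
    moreover have "dist (PG M (Suc k) (cubic_scheme M q) t) (q (m div 2)) \<le> dist (PG M (Suc k) (cubic_scheme M q) t) (cubic_scheme M q m) + dist (cubic_scheme M q m) (q (m div 2))"
      by (rule dist_triangle)
    ultimately show ?thesis by (simp add: dist_commute)
  qed
  then show ?thesis using a b c by simp
qed

theorem mainTheorem10:
  fixes M :: "real \<Rightarrow> 'a::complete_space \<Rightarrow> 'a \<Rightarrow> 'a"
  assumes "geodesic_selection M"
  shows "\<forall>p :: int \<Rightarrow> 'a. finite_delta p \<longrightarrow>
           delta (cubic_scheme M p) \<le> delta p / 2 \<and>
           uniformly_convergent_on UNIV (\<lambda>k. PG M k ((cubic_scheme M ^^ k) p))"
proof (intro allI impI conjI)
  fix p :: "int \<Rightarrow> 'a"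
  assume fd: "finite_delta p"
  define D where "D = delta p"
  have D: "\<And>i. dist (p i) (p (i + 1)) \<le> D"
    using fd unfolding finite_delta_def D_def delta_def by (intro cSUP_upper) auto
  have D0: "0 \<le> D" using D[of 0] zero_le_dist order_trans by blast
  show "delta (cubic_scheme M p) \<le> delta p / 2"
    unfolding delta_def[of "cubic_scheme M p"] D_def[symmetric]
    by (rule cSUP_least) (simp, rule step_bound[where p=p and D=D, OF assms D])
  define f where "f = (\<lambda>k. PG M k ((cubic_scheme M ^^ k) p))"
  have st: "dist (f k t) (f (Suc k) t) \<le> 2 * D / 2^k" for k t
  proof -
    have "dist (f (Suc k) t) (f k t) \<le> 2 * (D / 2^k)"
      unfolding f_def funpow.simps comp_def
      by (rule PG_step[where q="(cubic_scheme M ^^ k) p" and D="D/2^k", OF assms iter_bound[where p=p and D=D, OF assms D]])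
    then show ?thesis by (simp add: dist_commute)
  qed
  have tel: "dist (f k t) (f (k + j) t) \<le> 4 * D / 2^k - 4 * D / 2^(k+j)" for k j t
  proof (induction j)
    case 0 then show ?case by simp
  next
    case (Suc j)
    have "dist (f k t) (f (k + Suc j) t) \<le> dist (f k t) (f (k + j) t) + dist (f (k+j) t) (f (Suc (k + j)) t)"
      by (simp add: dist_triangle)
    also have "\<dots> \<le> 4 * D / 2^k - 4 * D / 2^(k+j) + 2 * D / 2^(k+j)"
      using Suc.IH st[of "k+j" t] by linarith
    also have "\<dots> = 4 * D / 2^k - 4 * D / 2^(k + Suc j)" by (simp add: field_simps)
    finally show ?case .
  qed
  have tel2: "dist (f k t) (f m t) \<le> 4 * D / 2^k" if "k \<le> m" for k m t
  proof -
    have "dist (f k t) (f (k + (m - k)) t) \<le> 4 * D / 2^k - 4 * D / 2^(k+(m-k))" by (rule tel)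
    moreover have "0 \<le> 4 * D / 2^(k+(m-k))" using D0 by simp
    ultimately show ?thesis using that by simp
  qed
  have "uniformly_Cauchy_on UNIV f"
  proof (rule uniformly_Cauchy_onI')
    fix e :: real assume e: "e > 0"
    obtain N where N: "(1/2::real)^N < e / (4 * D + 1)"
      using real_arch_pow_inv[of "e / (4 * D + 1)" "1/2"] e D0 by auto
    have "4 * D / 2^N < e"
    proof -
      have "4 * D / 2^N \<le> (4 * D + 1) * (1/2)^N" using D0 by (simp add: field_simps)
      also have "\<dots> < (4 * D + 1) * (e / (4 * D + 1))" using N D0 by (intro mult_strict_left_mono) auto
      also have "\<dots> = e" using D0 by simp
      finally show ?thesis .
    qed
    then show "\<exists>N. \<forall>x\<in>UNIV. \<forall>m\<ge>N. \<forall>n>m. dist (f m x) (f n x) < e"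
    proof (intro exI ballI allI impI)
      fix x m n assume "4 * D / 2^N < e" "N \<le> m" "m < n"
      have "dist (f m x) (f n x) \<le> 4 * D / 2^m" using tel2 \<open>m < n\<close> by simp
      also have "\<dots> \<le> 4 * D / 2^N" using D0 \<open>N \<le> m\<close>
        by (intro divide_left_mono) (auto intro: power_increasing)
      finally show "dist (f m x) (f n x) < e" using \<open>4 * D / 2^N < e\<close> by linarith
    qed
  qed
  then show "uniformly_convergent_on UNIV (\<lambda>k. PG M k ((cubic_scheme M ^^ k) p))"
    unfolding f_def by (rule Cauchy_uniformly_convergent)
qed

end
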